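(* $\lim_{L\to\infty}Y_L(0)=-1/2$, where $Y_L(t)=\dfrac{\partial y_L(t)/\partial L}{y_L(t)}$.
   Context: For $\alpha\in(0,1/\sqrt2)$ let $L_\alpha=\pi/\mathrm{AGM}(\alpha,\tfrac12\sqrt{1+2\alpha^2})$; $\alpha\mapsto L_\alpha$ is a decreasing bijection from $(0,1/\sqrt2)$ onto $(\pi\sqrt2,\infty)$. For $L>\pi\sqrt2$ let $\alpha$ satisfy $L_\alpha=L$ and let $x_0>y_0>0$ satisfy $x_0^2+y_0^2=1$, $x_0y_0=\alpha^2$. Let $(x_L,y_L,z_L)(t)$ solve $x'=-xz$, $y'=yz$, $z'=x^2-y^2$ ($'=d/dt$) with initial value $(x_0,y_0,0)$. *)

theory Defs
  imports "HOL-Analysis.Analysis"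
begin

fun agm_seq :: "real \<Rightarrow> real \<Rightarrow> nat \<Rightarrow> real \<times> real" where
  "agm_seq a b 0 = (a, b)"
| "agm_seq a b (Suc n) =
     (let (p, q) = agm_seq a b n in ((p + q) / 2, sqrt (p * q)))"

definition AGM :: "real \<Rightarrow> real \<Rightarrow> real" where
  "AGM a b = lim (\<lambda>n. fst (agm_seq a b n))"

definition L_alpha :: "real \<Rightarrow> real" where
  "L_alpha \<alpha> = pi / AGM \<alpha> (sqrt (1 + 2 * \<alpha>\<^sup>2) / 2)"

end

theory Submission
  imports Defs
begin

definition Pint :: "real \<Rightarrow> real \<Rightarrow> real \<Rightarrow> real \<Rightarrow> real" where
  "Pint a b g t = g / sqrt ((a\<^sup>2 * (cos t)\<^sup>2 + g\<^sup>2 * (sin t)\<^sup>2) * (b\<^sup>2 * (cos t)\<^sup>2 + g\<^sup>2 * (sin t)\<^sup>2))"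

definition Qint :: "real \<Rightarrow> real \<Rightarrow> real \<Rightarrow> real" where
  "Qint a b t = 1 / sqrt (a\<^sup>2 * (cos t)\<^sup>2 + b\<^sup>2 * (sin t)\<^sup>2)"

definition Fint :: "real \<Rightarrow> real \<Rightarrow> real \<Rightarrow> real" where
  "Fint a b x = 1 / sqrt ((a\<^sup>2 + x\<^sup>2) * (b\<^sup>2 + x\<^sup>2))"

lemma quad_pos: "a > 0 \<Longrightarrow> g > 0 \<Longrightarrow> a\<^sup>2 * (cos t)\<^sup>2 + g\<^sup>2 * (sin t)\<^sup>2 > (0::real)"
proof (cases "cos t = 0")
  case True
  hence "(sin t)\<^sup>2 = 1" using sin_cos_squared_add[of t] by simp
  thus "a > 0 \<Longrightarrow> g > 0 \<Longrightarrow> ?thesis" using True by simp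
next
  case False
  assume "a > 0" "g > 0"
  hence "a\<^sup>2 * (cos t)\<^sup>2 > 0" using False by simp
  moreover have "g\<^sup>2 * (sin t)\<^sup>2 \<ge> 0" by simp
  ultimately show ?thesis by linarith
qed

lemma cont_Pint: "a > 0 \<Longrightarrow> b > 0 \<Longrightarrow> g > 0 \<Longrightarrow> continuous_on S (Pint a b g)"
  unfolding Pint_def
  by (intro continuous_intros) (use quad_pos[of a _] quad_pos[of b _] in \<open>auto simp: less_imp_neq[THEN not_sym]\<close>)

lemma cont_Qint: "a > 0 \<Longrightarrow> b > 0 \<Longrightarrow> continuous_on S (Qint a b)"
  unfolding Qint_def
  by (intro continuous_intros) (use quad_pos[of a _] quad_pos[of b _] in \<open>auto simp: less_imp_neq[THEN not_sym]\<close>)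

lemma cont_Fint: "a > 0 \<Longrightarrow> b > 0 \<Longrightarrow> continuous_on S (Fint a b)"
  unfolding Fint_def
  by (intro continuous_intros) (auto simp: add_pos_nonneg)

lemma Pint_nonneg: "a > 0 \<Longrightarrow> b > 0 \<Longrightarrow> g > 0 \<Longrightarrow> Pint a b g t \<ge> 0"
  unfolding Pint_def by simp

lemma Pint_subst_pt:
  assumes "g > 0" "cos t > 0"
  shows "g / (cos t)\<^sup>2 * Fint a b (g * tan t) = Pint a b g t"
proof -
  have c: "cos t \<noteq> 0" using assms by simp
  have e1: "a\<^sup>2 + (g * tan t)\<^sup>2 = (a\<^sup>2 * (cos t)\<^sup>2 + g\<^sup>2 * (sin t)\<^sup>2) / (cos t)\<^sup>2"
    using c by (simp add: tan_def field_simps power2_eq_square)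
  have e2: "b\<^sup>2 + (g * tan t)\<^sup>2 = (b\<^sup>2 * (cos t)\<^sup>2 + g\<^sup>2 * (sin t)\<^sup>2) / (cos t)\<^sup>2"
    using c by (simp add: tan_def field_simps power2_eq_square)
  have "sqrt ((a\<^sup>2 + (g * tan t)\<^sup>2) * (b\<^sup>2 + (g * tan t)\<^sup>2))
     = sqrt ((a\<^sup>2 * (cos t)\<^sup>2 + g\<^sup>2 * (sin t)\<^sup>2) * (b\<^sup>2 * (cos t)\<^sup>2 + g\<^sup>2 * (sin t)\<^sup>2)) / (cos t)\<^sup>2"
    unfolding e1 e2 by (simp add: real_sqrt_divide real_sqrt_mult power2_eq_square)
  thus ?thesis unfolding Fint_def Pint_def using c by (simp add: field_simps)
qed

lemma Pint_subst:
  assumes a: "a > 0" "b > 0" "g > 0" and bt: "0 \<le> \<beta>" "\<beta> < pi/2"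
  shows "(Pint a b g has_integral integral {0..g * tan \<beta>} (Fint a b)) {0..\<beta>}"
proof -
  have cpos: "cos t > 0" if "t \<in> {0..\<beta>}" for t
    using that bt by (intro cos_gt_zero_pi) auto
  have mono: "tan x \<le> tan \<beta>" if "x \<in> {0..\<beta>}" for x
    using that bt by (intro tan_mono_le) auto
  have nn: "tan x \<ge> 0" if "x \<in> {0..\<beta>}" for x
    using that bt using tan_mono_le[of 0 x] by auto
  have "((\<lambda>x. (g / (cos x)\<^sup>2) *\<^sub>R Fint a b (g * tan x)) has_integral
        integral {g * tan 0..g * tan \<beta>} (Fint a b)) {0..\<beta>}"
  proof (rule has_integral_substitution[where c=0 and d="g * tan \<beta>" and g="\<lambda>x. g * tan x" and g'="\<lambda>x. g / (cos x)\<^sup>2" and f="Fint a b"])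
    show "0 \<le> \<beta>" by fact
    show "g * tan 0 \<le> g * tan \<beta>" using nn[of \<beta>] bt a by simp
    show "(\<lambda>x. g * tan x) ` {0..\<beta>} \<subseteq> {0..g * tan \<beta>}"
      using mono nn a by (auto intro!: mult_left_mono)
    show "continuous_on {0..g * tan \<beta>} (Fint a b)" using cont_Fint a by simp
    fix x assume x: "x \<in> {0..\<beta>}"
    have "((\<lambda>x. g * tan x) has_real_derivative g * inverse ((cos x)\<^sup>2)) (at x)"
      using cpos[OF x] by (auto intro!: derivative_eq_intros)
    thus "((\<lambda>x. g * tan x) has_real_derivative g / (cos x)\<^sup>2) (at x within {0..\<beta>})"
      by (simp add: field_simps has_field_derivative_at_within)
  qed
  moreover have "\<And>x. x \<in> {0..\<beta>} \<Longrightarrow> (g / (cos x)\<^sup>2) *\<^sub>R Fint a b (g * tan x) = Pint a b g x"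
    using Pint_subst_pt cpos a by simp
  ultimately show ?thesis using has_integral_cong[of "{0..\<beta>}" "\<lambda>x. (g / (cos x)\<^sup>2) *\<^sub>R Fint a b (g * tan x)" "Pint a b g"] by simp
qed

lemma quad_ge: "(m::real) \<le> a \<Longrightarrow> m \<le> g \<Longrightarrow> 0 \<le> m \<Longrightarrow> m\<^sup>2 \<le> a\<^sup>2 * (cos t)\<^sup>2 + g\<^sup>2 * (sin t)\<^sup>2"
proof -
  assume h: "m \<le> a" "m \<le> g" "0 \<le> m"
  have "m\<^sup>2 \<le> a\<^sup>2" "m\<^sup>2 \<le> g\<^sup>2" using h power_mono[of m a 2] power_mono[of m g 2] by auto
  hence "m\<^sup>2 * (cos t)\<^sup>2 + m\<^sup>2 * (sin t)\<^sup>2 \<le> a\<^sup>2 * (cos t)\<^sup>2 + g\<^sup>2 * (sin t)\<^sup>2"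
    by (intro add_mono mult_right_mono) auto
  moreover have "m\<^sup>2 * (cos t)\<^sup>2 + m\<^sup>2 * (sin t)\<^sup>2 = m\<^sup>2"
    by (metis mult.right_neutral distrib_left sin_cos_squared_add add.commute)
  ultimately show ?thesis by simp
qed

lemma quad_le: "(a::real) \<le> M \<Longrightarrow> g \<le> M \<Longrightarrow> 0 \<le> a \<Longrightarrow> 0 \<le> g \<Longrightarrow> a\<^sup>2 * (cos t)\<^sup>2 + g\<^sup>2 * (sin t)\<^sup>2 \<le> M\<^sup>2"
proof -
  assume h: "a \<le> M" "g \<le> M" "0 \<le> a" "0 \<le> g"
  have "a\<^sup>2 \<le> M\<^sup>2" "g\<^sup>2 \<le> M\<^sup>2" using h power_mono[of a M 2] power_mono[of g M 2] by auto
  hence "a\<^sup>2 * (cos t)\<^sup>2 + g\<^sup>2 * (sin t)\<^sup>2 \<le> M\<^sup>2 * (cos t)\<^sup>2 + M\<^sup>2 * (sin t)\<^sup>2"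
    by (intro add_mono mult_right_mono) auto
  moreover have "M\<^sup>2 * (cos t)\<^sup>2 + M\<^sup>2 * (sin t)\<^sup>2 = M\<^sup>2"
    by (metis mult.right_neutral distrib_left sin_cos_squared_add add.commute)
  ultimately show ?thesis by simp
qed

lemma Pint_le:
  assumes "a > 0" "b > 0" "g > 0"
  shows "Pint a b g t \<le> g / (min a g * min b g)"
proof -
  have m1: "(min a g)\<^sup>2 \<le> a\<^sup>2 * (cos t)\<^sup>2 + g\<^sup>2 * (sin t)\<^sup>2"
    using assms by (intro quad_ge) auto
  have m2: "(min b g)\<^sup>2 \<le> b\<^sup>2 * (cos t)\<^sup>2 + g\<^sup>2 * (sin t)\<^sup>2"
    using assms by (intro quad_ge) auto
  have "(min a g)\<^sup>2 * (min b g)\<^sup>2 \<le> (a\<^sup>2 * (cos t)\<^sup>2 + g\<^sup>2 * (sin t)\<^sup>2) * (b\<^sup>2 * (cos t)\<^sup>2 + g\<^sup>2 * (sin t)\<^sup>2)"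
    using m1 m2 by (intro mult_mono) auto
  hence "sqrt ((min a g)\<^sup>2 * (min b g)\<^sup>2) \<le> sqrt ((a\<^sup>2 * (cos t)\<^sup>2 + g\<^sup>2 * (sin t)\<^sup>2) * (b\<^sup>2 * (cos t)\<^sup>2 + g\<^sup>2 * (sin t)\<^sup>2))"
    by (rule real_sqrt_le_mono)
  moreover have "sqrt ((min a g)\<^sup>2 * (min b g)\<^sup>2) = min a g * min b g"
    using assms by (simp add: real_sqrt_mult)
  moreover have "min a g * min b g > 0" using assms by simp
  ultimately show ?thesis unfolding Pint_def using assms
    by (intro frac_le) auto
qed

lemma Pint_integrable: "a > 0 \<Longrightarrow> b > 0 \<Longrightarrow> g > 0 \<Longrightarrow> Pint a b g integrable_on {x..y}"
  by (intro integrable_continuous_interval cont_Pint)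

lemma P_le:
  assumes a: "a > 0" "b > 0" "g1 > 0" "g2 > 0"
  shows "integral {0..pi/2} (Pint a b g1) \<le> integral {0..pi/2} (Pint a b g2)"
proof (rule ccontr)
  define I1 where "I1 = integral {0..pi/2} (Pint a b g1)"
  define I2 where "I2 = integral {0..pi/2} (Pint a b g2)"
  define C where "C = g1 / (min a g1 * min b g1)"
  assume "\<not> ?thesis"
  hence lt: "I2 < I1" unfolding I1_def I2_def by simp
  have C0: "C > 0" unfolding C_def using a by simp
  define \<delta> where "\<delta> = min ((I1 - I2) / (2 * C)) (pi/4)"
  have d0: "\<delta> > 0" unfolding \<delta>_def using lt C0 by simp
  define \<beta> where "\<beta> = pi/2 - \<delta>"
  have "\<delta> \<le> pi/4" unfolding \<delta>_def by simp
  hence b0: "0 \<le> \<beta>" "\<beta> < pi/2" unfolding \<beta>_def using d0 pi_gt_zero by auto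
  define \<beta>' where "\<beta>' = arctan (g1 * tan \<beta> / g2)"
  have tb: "tan \<beta> \<ge> 0" using tan_mono_le[of 0 \<beta>] b0 by auto
  have b1: "0 \<le> \<beta>'" "\<beta>' < pi/2" unfolding \<beta>'_def using arctan_ubound tb a by auto
  have tb': "g2 * tan \<beta>' = g1 * tan \<beta>" unfolding \<beta>'_def using a by (simp add: tan_arctan)
  have "integral {0..\<beta>} (Pint a b g1) = integral {0..g1 * tan \<beta>} (Fint a b)"
    using Pint_subst[OF a(1,2,3) b0] by (rule integral_unique)
  also have "\<dots> = integral {0..\<beta>'} (Pint a b g2)"
    using Pint_subst[OF a(1,2,4) b1] tb' by (simp add: integral_unique)
  also have "\<dots> \<le> I2" unfolding I2_def
    using b1 a Pint_nonneg[of a b g2] by (intro integral_subset_le Pint_integrable) auto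
  finally have h1: "integral {0..\<beta>} (Pint a b g1) \<le> I2" .
  have "integral {\<beta>..pi/2} (Pint a b g1) \<le> integral {\<beta>..pi/2} (\<lambda>x. C)"
    unfolding C_def using a by (intro integral_le Pint_integrable Pint_le) auto
  also have "\<dots> = (pi/2 - \<beta>) * C" using b0 by simp
  also have "\<dots> = \<delta> * C" unfolding \<beta>_def by simp
  also have "\<dots> \<le> (I1 - I2) / (2 * C) * C" unfolding \<delta>_def using C0 by (intro mult_right_mono) auto
  also have "\<dots> = (I1 - I2) / 2" using C0 by simp
  finally have h2: "integral {\<beta>..pi/2} (Pint a b g1) \<le> (I1 - I2) / 2" .
  have int: "Pint a b g1 integrable_on {0..pi/2}" using a by (intro Pint_integrable)
  have "integral {0..\<beta>} (Pint a b g1) + integral {\<beta>..pi/2} (Pint a b g1) = I1"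
    unfolding I1_def by (rule Henstock_Kurzweil_Integration.integral_combine) (use b0 int in auto)
  with h1 h2 lt show False by (simp add: field_simps)
qed

lemma P_indep: "a > 0 \<Longrightarrow> b > 0 \<Longrightarrow> g1 > 0 \<Longrightarrow> g2 > 0 \<Longrightarrow>
  integral {0..pi/2} (Pint a b g1) = integral {0..pi/2} (Pint a b g2)"
  by (intro antisym P_le) auto

lemma Q_eq_P_pt: "a > 0 \<Longrightarrow> b > 0 \<Longrightarrow> Qint a b t = Pint a b b t"
proof -
  assume a: "a > 0" "b > 0"
  have "b\<^sup>2 * (cos t)\<^sup>2 + b\<^sup>2 * (sin t)\<^sup>2 = b\<^sup>2"
    by (metis mult.right_neutral distrib_left sin_cos_squared_add add.commute)
  hence "sqrt ((a\<^sup>2 * (cos t)\<^sup>2 + b\<^sup>2 * (sin t)\<^sup>2) * (b\<^sup>2 * (cos t)\<^sup>2 + b\<^sup>2 * (sin t)\<^sup>2))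
      = sqrt (a\<^sup>2 * (cos t)\<^sup>2 + b\<^sup>2 * (sin t)\<^sup>2) * b"
    using a by (simp add: real_sqrt_mult)
  moreover have "sqrt (a\<^sup>2 * (cos t)\<^sup>2 + b\<^sup>2 * (sin t)\<^sup>2) > 0" using quad_pos a by simp
  ultimately show ?thesis unfolding Qint_def Pint_def using a by simp
qed

lemma Q_eq_P: "a > 0 \<Longrightarrow> b > 0 \<Longrightarrow> integral {0..pi/2} (Qint a b) = integral {0..pi/2} (Pint a b b)"
  using Q_eq_P_pt by (intro integral_cong) auto

lemma Pint_sym:
  assumes "a > 0" "b > 0" "g = sqrt (a * b)"
  shows "Pint a b g (pi/2 - x) = Pint a b g x"
proof -
  have G: "g\<^sup>2 = a * b" using assms by simp
  have "(a\<^sup>2 * (sin x)\<^sup>2 + g\<^sup>2 * (cos x)\<^sup>2) * (b\<^sup>2 * (sin x)\<^sup>2 + g\<^sup>2 * (cos x)\<^sup>2)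
      = (a\<^sup>2 * (cos x)\<^sup>2 + g\<^sup>2 * (sin x)\<^sup>2) * (b\<^sup>2 * (cos x)\<^sup>2 + g\<^sup>2 * (sin x)\<^sup>2)"
    unfolding G by (simp add: algebra_simps power2_eq_square)
  thus ?thesis unfolding Pint_def by (simp add: cos_diff sin_diff)
qed

lemma Q_step_pt:
  assumes "a > 0" "b > 0" "g = sqrt (a * b)"
  shows "Qint ((a+b)/2) g (2 * x - pi/2) = Pint a b g x"
proof -
  have G: "g\<^sup>2 = a * b" using assms by simp
  have g0: "g > 0" using assms by simp
  have c: "cos (2 * x - pi/2) = 2 * sin x * cos x" by (simp add: cos_diff sin_double)
  have s: "sin (2 * x - pi/2) = - ((cos x)\<^sup>2 - (sin x)\<^sup>2)" by (simp add: sin_diff cos_double)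
  have ab: "a * b > 0" using assms by simp
  have key: "((a+b)/2)\<^sup>2 * (2 * sin x * cos x)\<^sup>2 + (a * b) * (- ((cos x)\<^sup>2 - (sin x)\<^sup>2))\<^sup>2
    = (a\<^sup>2 * (cos x)\<^sup>2 + (a * b) * (sin x)\<^sup>2) * (b\<^sup>2 * (cos x)\<^sup>2 + (a * b) * (sin x)\<^sup>2) / (a * b)"
    using assms(1,2) by (simp add: field_simps) (simp add: algebra_simps power2_eq_square power4_eq_xxxx)
  show ?thesis unfolding Qint_def Pint_def c s G key using g0 assms(3)
    by (simp add: real_sqrt_divide)
qed

lemma Q_step:
  assumes a: "a > 0" "b > 0" and gdef: "g = sqrt (a * b)"
  shows "integral {0..pi/2} (Qint ((a+b)/2) g) = integral {0..pi/2} (Pint a b g)"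
proof -
  have g0: "g > 0" using a gdef by simp
  have m0: "(a+b)/2 > 0" using a by simp
  have "((\<lambda>x. 2 *\<^sub>R Qint ((a+b)/2) g (2 * x - pi/2)) has_integral
        integral {2 * (pi/4) - pi/2..2 * (pi/2) - pi/2} (Qint ((a+b)/2) g)) {pi/4..pi/2}"
  proof (rule has_integral_substitution[where c=0 and d="pi/2" and g="\<lambda>x. 2 * x - pi/2" and g'="\<lambda>x. 2" and f="Qint ((a+b)/2) g"])
    show "pi/4 \<le> pi/2" by simp
    show "2 * (pi/4) - pi/2 \<le> 2 * (pi/2) - pi/2" by simp
    show "(\<lambda>x. 2 * x - pi/2) ` {pi/4..pi/2} \<subseteq> {0..pi/2}" by auto
    show "continuous_on {0..pi/2} (Qint ((a+b)/2) g)" using cont_Qint m0 g0 by simp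
    fix x show "((\<lambda>x. 2 * x - pi/2) has_real_derivative 2) (at x within {pi/4..pi/2})"
      by (auto intro!: derivative_eq_intros)
  qed
  hence h1: "((\<lambda>x. 2 * Pint a b g x) has_integral integral {0..pi/2} (Qint ((a+b)/2) g)) {pi/4..pi/2}"
    using Q_step_pt[OF a gdef] by simp
  have "((\<lambda>x. (-1) *\<^sub>R Pint a b g (pi/2 - x)) has_integral
        (integral {pi/2 - pi/4..pi/2 - pi/2} (Pint a b g) - integral {pi/2 - pi/2..pi/2 - pi/4} (Pint a b g))) {pi/4..pi/2}"
  proof (rule has_integral_substitution_general[where s="{}" and c=0 and d="pi/2" and g="\<lambda>x. pi/2 - x" and g'="\<lambda>x. -1" and f="Pint a b g"])
    show "pi/4 \<le> pi/2" by simp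
    show "(\<lambda>x. pi/2 - x) ` {pi/4..pi/2} \<subseteq> {0..pi/2}" by auto
    show "continuous_on {0..pi/2} (Pint a b g)" using cont_Pint a g0 by simp
    show "continuous_on {pi/4..pi/2} (\<lambda>x. pi/2 - x)" by (intro continuous_intros)
    fix x show "((\<lambda>x. pi/2 - x) has_real_derivative -1) (at x within {pi/4..pi/2})"
      by (auto intro!: derivative_eq_intros)
  qed auto
  hence h2: "((\<lambda>x. Pint a b g x) has_integral integral {0..pi/4} (Pint a b g)) {pi/4..pi/2}"
    using Pint_sym[OF a gdef] by (simp add: has_integral_neg_iff)
  have int: "Pint a b g integrable_on {0..pi/2}" using a g0 by (intro Pint_integrable)
  have "integral {0..pi/4} (Pint a b g) + integral {pi/4..pi/2} (Pint a b g) = integral {0..pi/2} (Pint a b g)"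
    by (rule Henstock_Kurzweil_Integration.integral_combine) (use int in auto)
  moreover have "integral {pi/4..pi/2} (Pint a b g) = integral {0..pi/4} (Pint a b g)"
    using h2 by (rule integral_unique)
  moreover have "integral {pi/4..pi/2} (\<lambda>x. 2 * Pint a b g x) = integral {0..pi/2} (Qint ((a+b)/2) g)"
    using h1 by (rule integral_unique)
  moreover have "integral {pi/4..pi/2} (\<lambda>x. 2 * Pint a b g x) = 2 * integral {pi/4..pi/2} (Pint a b g)"
    by (simp add: integral_mult_right)
  ultimately show ?thesis by linarith
qed

lemma Q_invariant:
  assumes a: "a > 0" "b > 0"
  shows "integral {0..pi/2} (Qint ((a+b)/2) (sqrt (a*b))) = integral {0..pi/2} (Qint a b)"
  using Q_step[OF a refl] P_indep[of a b "sqrt (a*b)" b] Q_eq_P[OF a] a by simp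

lemma Q_bounds:
  assumes a: "a > 0" "b > 0"
  shows "pi / (2 * max a b) \<le> integral {0..pi/2} (Qint a b)"
    "integral {0..pi/2} (Qint a b) \<le> pi / (2 * min a b)"
proof -
  have int: "Qint a b integrable_on {0..pi/2}" using a by (intro integrable_continuous_interval cont_Qint)
  have lo: "1 / max a b \<le> Qint a b t" for t
  proof -
    have "a\<^sup>2 * (cos t)\<^sup>2 + b\<^sup>2 * (sin t)\<^sup>2 \<le> (max a b)\<^sup>2" using a by (intro quad_le) auto
    hence "sqrt (a\<^sup>2 * (cos t)\<^sup>2 + b\<^sup>2 * (sin t)\<^sup>2) \<le> max a b"
      using a real_sqrt_le_mono by fastforce
    moreover have "sqrt (a\<^sup>2 * (cos t)\<^sup>2 + b\<^sup>2 * (sin t)\<^sup>2) > 0" using quad_pos a by simp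
    ultimately show ?thesis unfolding Qint_def by (intro frac_le) auto
  qed
  have hi: "Qint a b t \<le> 1 / min a b" for t
  proof -
    have "(min a b)\<^sup>2 \<le> a\<^sup>2 * (cos t)\<^sup>2 + b\<^sup>2 * (sin t)\<^sup>2" using a by (intro quad_ge) auto
    hence "min a b \<le> sqrt (a\<^sup>2 * (cos t)\<^sup>2 + b\<^sup>2 * (sin t)\<^sup>2)"
      using a real_sqrt_le_mono by fastforce
    thus ?thesis unfolding Qint_def using a by (intro frac_le) auto
  qed
  have "integral {0..pi/2} (\<lambda>t. 1 / max a b) \<le> integral {0..pi/2} (Qint a b)"
    using lo int by (intro integral_le) auto
  thus "pi / (2 * max a b) \<le> integral {0..pi/2} (Qint a b)" by simp
  have "integral {0..pi/2} (Qint a b) \<le> integral {0..pi/2} (\<lambda>t. 1 / min a b)"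
    using hi int by (intro integral_le) auto
  thus "integral {0..pi/2} (Qint a b) \<le> pi / (2 * min a b)" by simp
qed

lemma agm_Suc': "agm_seq a b (Suc n) = ((fst (agm_seq a b n) + snd (agm_seq a b n)) / 2,
   sqrt (fst (agm_seq a b n) * snd (agm_seq a b n)))"
  by (simp add: split_beta)

lemma agm_step_diff:
  assumes "p > 0" "q > 0"
  shows "\<bar>(p + q) / 2 - sqrt (p * q)\<bar> \<le> \<bar>p - q\<bar> / 2"
proof -
  define u where "u = sqrt p"
  define v where "v = sqrt q"
  have u: "u > 0" "p = u\<^sup>2" and v: "v > 0" "q = v\<^sup>2" using assms unfolding u_def v_def by auto
  have e: "sqrt (p * q) = u * v" unfolding u_def v_def by (simp add: real_sqrt_mult)
  have e1: "(p + q) / 2 - sqrt (p * q) = (u - v)\<^sup>2 / 2" by (subst e) (simp add: u(2) v(2) power2_eq_square algebra_simps)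
  have e2: "(u - v)\<^sup>2 \<le> \<bar>p - q\<bar>"
  proof -
    have "p - q = (u - v) * (u + v)" unfolding u(2) v(2) by (simp add: power2_eq_square algebra_simps)
    hence "\<bar>p - q\<bar> = \<bar>u - v\<bar> * (u + v)" using u v by (simp add: abs_mult)
    moreover have "\<bar>u - v\<bar> \<le> u + v" using u v by simp
    moreover have "(u - v)\<^sup>2 = \<bar>u - v\<bar> * \<bar>u - v\<bar>" by (simp add: power2_eq_square)
    moreover have "\<bar>u - v\<bar> * \<bar>u - v\<bar> \<le> \<bar>u - v\<bar> * (u + v)"
      using \<open>\<bar>u - v\<bar> \<le> u + v\<close> by (intro mult_left_mono) auto
    ultimately show ?thesis by simp
  qed
  show ?thesis unfolding e1 using e2 by simp
qed

lemma agm_props: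
  assumes a: "a > 0" "b > 0"
  shows "fst (agm_seq a b n) > 0 \<and> snd (agm_seq a b n) > 0 \<and>
    integral {0..pi/2} (Qint (fst (agm_seq a b n)) (snd (agm_seq a b n))) = integral {0..pi/2} (Qint a b) \<and>
    \<bar>fst (agm_seq a b n) - snd (agm_seq a b n)\<bar> \<le> \<bar>a - b\<bar> / 2 ^ n"
proof (induction n)
  case 0 thus ?case using a by simp
next
  case (Suc n)
  define p where "p = fst (agm_seq a b n)"
  define q where "q = snd (agm_seq a b n)"
  have pq: "p > 0" "q > 0" "integral {0..pi/2} (Qint p q) = integral {0..pi/2} (Qint a b)"
    "\<bar>p - q\<bar> \<le> \<bar>a - b\<bar> / 2 ^ n" using Suc unfolding p_def q_def by auto
  have "\<bar>(p + q) / 2 - sqrt (p * q)\<bar> \<le> \<bar>p - q\<bar> / 2" by (rule agm_step_diff[OF pq(1,2)])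
  also have "\<dots> \<le> (\<bar>a - b\<bar> / 2 ^ n) / 2" using pq(4) by simp
  also have "\<dots> = \<bar>a - b\<bar> / 2 ^ Suc n" by simp
  finally have "\<bar>(p + q) / 2 - sqrt (p * q)\<bar> \<le> \<bar>a - b\<bar> / 2 ^ Suc n" .
  moreover have "integral {0..pi/2} (Qint ((p + q) / 2) (sqrt (p * q))) = integral {0..pi/2} (Qint a b)"
    using Q_invariant[OF pq(1,2)] pq(3) by simp
  ultimately show ?case unfolding agm_Suc' p_def[symmetric] q_def[symmetric] using pq by simp
qed

lemma AGM_Q:
  assumes a: "a > 0" "b > 0"
  shows "AGM a b = pi / (2 * integral {0..pi/2} (Qint a b))"
proof -
  define Q where "Q = integral {0..pi/2} (Qint a b)"
  define M where "M = pi / (2 * Q)"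
  have Q0: "Q > 0" unfolding Q_def using a
    by (intro less_le_trans[OF _ Q_bounds(1)[OF a]]) auto
  have bnd: "\<bar>fst (agm_seq a b n) - M\<bar> \<le> \<bar>a - b\<bar> / 2 ^ n" for n
  proof -
    define p where "p = fst (agm_seq a b n)"
    define q where "q = snd (agm_seq a b n)"
    have pq: "p > 0" "q > 0" "integral {0..pi/2} (Qint p q) = Q"
      "\<bar>p - q\<bar> \<le> \<bar>a - b\<bar> / 2 ^ n" using agm_props[OF a, of n] unfolding p_def q_def Q_def by auto
    have "pi / (2 * max p q) \<le> Q" "Q \<le> pi / (2 * min p q)" using Q_bounds[OF pq(1,2)] pq(3) by auto
    hence "min p q \<le> M" "M \<le> max p q" unfolding M_def using Q0 pq(1,2)
      by (auto simp: field_simps simp del: min_less_iff_conj max_less_iff_conj)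
    hence "\<bar>p - M\<bar> \<le> \<bar>p - q\<bar>" by linarith
    thus ?thesis using pq(4) unfolding p_def by linarith
  qed
  have "(\<lambda>n. \<bar>a - b\<bar> / 2 ^ n) \<longlonglongrightarrow> 0"
    by (intro LIMSEQ_divide_realpow_zero) auto
  hence "(\<lambda>n. fst (agm_seq a b n) - M) \<longlonglongrightarrow> 0"
    by (rule Lim_null_comparison[rotated]) (use bnd in auto)
  hence "(\<lambda>n. fst (agm_seq a b n)) \<longlonglongrightarrow> M" by (rule LIM_zero_cancel)
  thus ?thesis unfolding AGM_def M_def Q_def by (rule limI)
qed


definition H :: "real \<Rightarrow> real \<Rightarrow> real" where
  "H x t = x\<^sup>2 * (cos t)\<^sup>2 + ((1 + 2 * x\<^sup>2) / 4) * (sin t)\<^sup>2"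

definition Lf :: "real \<Rightarrow> real" where
  "Lf x = 2 * integral {0..pi/2} (\<lambda>t. 1 / sqrt (H x t))"

definition dF :: "real \<Rightarrow> real \<Rightarrow> real" where
  "dF x t = - (x * (cos t)\<^sup>2 + x * (sin t)\<^sup>2 / 2) / (H x t * sqrt (H x t))"

definition bb :: "real \<Rightarrow> real" where "bb x = sqrt (1 + 2 * x\<^sup>2) / 2"

lemma bb_sq: "(bb x)\<^sup>2 = (1 + 2 * x\<^sup>2) / 4"
  unfolding bb_def by (simp add: power_divide)

lemma bb_pos: "bb x > 0" unfolding bb_def by (simp add: add_pos_nonneg)

lemma H_eq: "H x t = x\<^sup>2 * (cos t)\<^sup>2 + (bb x)\<^sup>2 * (sin t)\<^sup>2"
  unfolding H_def bb_sq ..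

lemma H_pos: "x > 0 \<Longrightarrow> H x t > 0"
  unfolding H_eq using quad_pos bb_pos by blast

lemma L_alpha_Lf: "x > 0 \<Longrightarrow> L_alpha x = Lf x"
proof -
  assume x: "x > 0"
  have "AGM x (bb x) = pi / (2 * integral {0..pi/2} (Qint x (bb x)))"
    using AGM_Q x bb_pos by blast
  moreover have "integral {0..pi/2} (Qint x (bb x)) = integral {0..pi/2} (\<lambda>t. 1 / sqrt (H x t))"
    unfolding Qint_def H_eq ..
  moreover have "integral {0..pi/2} (Qint x (bb x)) > 0"
    using Q_bounds(1)[OF x bb_pos] x bb_pos[of x] by (intro less_le_trans[OF _ Q_bounds(1)[OF x bb_pos]]) auto
  ultimately show ?thesis unfolding L_alpha_def Lf_def bb_def[symmetric] by simp
qed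

lemma dF_deriv:
  assumes x: "x > 0"
  shows "((\<lambda>x. 1 / sqrt (H x t)) has_real_derivative dF x t) (at x)"
proof -
  have h: "H x t > 0" using H_pos x by simp
  have d: "((\<lambda>x. H x t) has_real_derivative (2 * x * (cos t)\<^sup>2 + x * (sin t)\<^sup>2)) (at x)"
    unfolding H_def by (auto intro!: derivative_eq_intros simp: field_simps)
  have s: "sqrt (H x t) * sqrt (H x t) = H x t" using h by simp
  have sp: "sqrt (H x t) > 0" using h by simp
  define D where "D = 2 * x * (cos t)\<^sup>2 + x * (sin t)\<^sup>2"
  have d2: "((\<lambda>x. sqrt (H x t)) has_real_derivative (inverse (sqrt (H x t)) / 2 * D)) (at x)"
    by (rule DERIV_chain2[OF DERIV_real_sqrt[OF h] d[folded D_def]])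
  have d3: "((\<lambda>x. inverse (sqrt (H x t))) has_real_derivative
     (- ((inverse (sqrt (H x t)) / 2 * D) * inverse ((sqrt (H x t)) ^ Suc (Suc 0))))) (at x)"
    by (rule DERIV_inverse_fun[OF d2]) (use sp in simp)
  have e: "- ((inverse (sqrt (H x t)) / 2 * D) * inverse ((sqrt (H x t)) ^ Suc (Suc 0))) = dF x t"
    unfolding dF_def D_def using sp h by (simp add: field_simps)
  show ?thesis using d3 unfolding e by (simp add: divide_inverse)
qed


lemma cont_invsqrtH: "x > 0 \<Longrightarrow> continuous_on S (\<lambda>t. 1 / sqrt (H x t))"
proof -
  assume x: "x > 0"
  have "\<And>t. H x t \<noteq> 0" using H_pos[OF x] by (simp add: less_imp_neq[THEN not_sym])
  thus ?thesis unfolding H_def by (intro continuous_intros) auto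
qed

lemma cont_dF: "continuous_on ({0<..} \<times> S) (\<lambda>(x, t). dF x t)"
proof -
  have "continuous_on ({0<..} \<times> S) (\<lambda>z. dF (fst z) (snd z))"
  proof -
    have "\<And>z. z \<in> {0<..} \<times> S \<Longrightarrow> H (fst z) (snd z) > 0" using H_pos by auto
    hence nz: "\<And>z. z \<in> {0<..} \<times> S \<Longrightarrow> H (fst z) (snd z) * sqrt (H (fst z) (snd z)) \<noteq> 0"
      "\<And>z. z \<in> {0<..} \<times> S \<Longrightarrow> H (fst z) (snd z) \<noteq> 0" by (simp_all add: less_imp_neq[THEN not_sym])
    show ?thesis unfolding dF_def using nz unfolding H_def by (intro continuous_intros) auto
  qed
  thus ?thesis by (simp add: case_prod_beta')
qed

definition DL :: "real \<Rightarrow> real" where "DL x = 2 * integral {0..pi/2} (dF x)"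

lemma Lf_deriv:
  assumes x: "x > 0"
  shows "(Lf has_real_derivative DL x) (at x)"
proof -
  have "((\<lambda>x. integral (cbox 0 (pi/2)) (\<lambda>t. 1 / sqrt (H x t))) has_real_derivative integral (cbox 0 (pi/2)) (dF x)) (at x within {0<..})"
  proof (rule leibniz_rule_field_derivative)
    fix y t assume y: "y \<in> ({0<..} :: real set)"
    have "y > 0" using y by simp
    from dF_deriv[OF this, of t] show "((\<lambda>x. 1 / sqrt (H x t)) has_real_derivative dF y t) (at y within {0<..})"
      by (rule has_field_derivative_at_within)
  next
    fix y assume "y \<in> ({0<..} :: real set)"
    thus "(\<lambda>t. 1 / sqrt (H y t)) integrable_on cbox 0 (pi/2)"
      by (intro integrable_continuous cont_invsqrtH) auto
  next
    show "continuous_on ({0<..} \<times> cbox 0 (pi/2)) (\<lambda>(x, t). dF x t)" by (rule cont_dF)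
  next
    show "x \<in> {0<..}" using x by simp
  next
    show "convex ({0<..} :: real set)" by (rule convex_real_interval)
  qed
  hence "((\<lambda>x. integral {0..pi/2} (\<lambda>t. 1 / sqrt (H x t))) has_real_derivative integral {0..pi/2} (dF x)) (at x)"
    using x by (simp add: at_within_open[of x "{0<..}"])
  from DERIV_cmult[OF this, of 2] show ?thesis unfolding Lf_def DL_def by simp
qed

definition jj :: "real \<Rightarrow> real \<Rightarrow> real" where
  "jj x t = (x\<^sup>2 * (cos t)\<^sup>2 + x\<^sup>2 * (sin t)\<^sup>2 / 2) / (H x t * sqrt (H x t))"

definition JJ :: "real \<Rightarrow> real" where "JJ x = integral {0..pi/2} (jj x)"

lemma cont_jj: "x > 0 \<Longrightarrow> continuous_on S (jj x)"
proof -
  assume x: "x > 0"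
  have "\<And>t. H x t \<noteq> 0" "\<And>t. H x t * sqrt (H x t) \<noteq> 0" using H_pos[OF x] by (simp_all add: less_imp_neq[THEN not_sym])
  thus ?thesis unfolding jj_def H_def by (intro continuous_intros) auto
qed

lemma xDL: "x > 0 \<Longrightarrow> x * DL x = -2 * JJ x"
proof -
  assume x: "x > 0"
  have pt: "jj x t = (-x) * dF x t" for t
  proof -
    have e: "x\<^sup>2 * (cos t)\<^sup>2 + x\<^sup>2 * (sin t)\<^sup>2 / 2 = x * (x * (cos t)\<^sup>2 + x * (sin t)\<^sup>2 / 2)"
      by (simp add: algebra_simps power2_eq_square)
    show ?thesis unfolding jj_def dF_def e
      using mult_minus_left[of x "- _ / _"] by (metis minus_divide_left minus_minus mult_minus_right times_divide_eq_right)
  qed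
  have "jj x = (\<lambda>t. (-x) * dF x t)" using pt by (rule ext)
  hence "JJ x = integral {0..pi/2} (\<lambda>t. (-x) * dF x t)" unfolding JJ_def by (simp only:)
  also have "\<dots> = (-x) * integral {0..pi/2} (dF x)" by (rule integral_mult_right)
  finally show ?thesis unfolding DL_def by simp
qed

lemma antideriv:
  assumes x: "x > 0"
  shows "((\<lambda>t. x\<^sup>2 * cos t / (H x t * sqrt (H x t))) has_integral 1 / bb x) {0..pi/2}"
proof -
  define b where "b = bb x"
  have b: "b > 0" "H x t = x\<^sup>2 * (cos t)\<^sup>2 + b\<^sup>2 * (sin t)\<^sup>2" for t unfolding b_def using bb_pos H_eq by auto
  have Hp: "H x t > 0" for t using H_pos x by simp
  have dH: "((\<lambda>t. H x t) has_real_derivative 2 * sin t * cos t * (b\<^sup>2 - x\<^sup>2)) (at t)" for t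
    unfolding b(2) by (auto intro!: derivative_eq_intros simp: power2_eq_square algebra_simps)
  have der: "((\<lambda>t. sin t / sqrt (H x t)) has_real_derivative x\<^sup>2 * cos t / (H x t * sqrt (H x t))) (at t)" for t
  proof -
    have sp: "sqrt (H x t) > 0" using Hp by simp
    have d2: "((\<lambda>t. sqrt (H x t)) has_real_derivative (inverse (sqrt (H x t)) / 2 * (2 * sin t * cos t * (b\<^sup>2 - x\<^sup>2)))) (at t)"
      by (rule DERIV_chain2[OF DERIV_real_sqrt[OF Hp] dH])
    have d3: "((\<lambda>t. sin t / sqrt (H x t)) has_real_derivative
        (cos t * sqrt (H x t) - sin t * (inverse (sqrt (H x t)) / 2 * (2 * sin t * cos t * (b\<^sup>2 - x\<^sup>2)))) / (sqrt (H x t) * sqrt (H x t))) (at t)"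
      by (rule DERIV_divide[OF DERIV_sin d2]) (use sp in simp)
    have s2: "sqrt (H x t) * sqrt (H x t) = H x t" using Hp[of t] by simp
    have gen: "(c * r - sn * (inverse r / 2 * (2 * sn * c * k))) / (r * r) = (c * (r * r) - sn\<^sup>2 * c * k) / ((r * r) * r)"
      if "r > 0" for r c sn k :: real
      using that by (simp add: field_simps power2_eq_square)
    have num0: "cos t * H x t - (sin t)\<^sup>2 * cos t * (b\<^sup>2 - x\<^sup>2) = x\<^sup>2 * cos t * ((sin t)\<^sup>2 + (cos t)\<^sup>2)"
      unfolding b(2) by algebra
    have num: "cos t * H x t - (sin t)\<^sup>2 * cos t * (b\<^sup>2 - x\<^sup>2) = x\<^sup>2 * cos t"
      unfolding num0 by simp
    have "(cos t * sqrt (H x t) - sin t * (inverse (sqrt (H x t)) / 2 * (2 * sin t * cos t * (b\<^sup>2 - x\<^sup>2)))) / (sqrt (H x t) * sqrt (H x t))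
       = x\<^sup>2 * cos t / (H x t * sqrt (H x t))"
      by (subst gen[OF sp]) (simp only: s2 num)
    with d3 show ?thesis by simp
  qed
  have "((\<lambda>t. x\<^sup>2 * cos t / (H x t * sqrt (H x t))) has_integral (sin (pi/2) / sqrt (H x (pi/2)) - sin 0 / sqrt (H x 0))) {0..pi/2}"
  proof (rule fundamental_theorem_of_calculus)
    show "0 \<le> pi/2" by simp
    fix t :: real
    show "((\<lambda>t. sin t / sqrt (H x t)) has_vector_derivative x\<^sup>2 * cos t / (H x t * sqrt (H x t))) (at t within {0..pi/2})"
      using der[of t] by (simp add: has_real_derivative_iff_has_vector_derivative[symmetric] has_field_derivative_at_within)
  qed
  moreover have "sin (pi/2) / sqrt (H x (pi/2)) - sin 0 / sqrt (H x 0) = 1 / b"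
    unfolding b(2) using b(1) by simp
  ultimately show ?thesis unfolding b_def by simp
qed

lemma jj_bounds:
  assumes x: "0 < x" "x \<le> 1/2" and t: "0 \<le> t" "t \<le> pi/2"
  shows "x\<^sup>2 * cos t / (H x t * sqrt (H x t)) - x / (bb x)\<^sup>2 * cos t \<le> jj x t"
    "jj x t \<le> x\<^sup>2 * cos t / (H x t * sqrt (H x t)) + x / (2 * (bb x)\<^sup>2)"
proof -
  define b where "b = bb x"
  define c where "c = cos t"
  define sn where "sn = sin t"
  define K where "K = H x t * sqrt (H x t)"
  have b0: "b > 0" unfolding b_def by (rule bb_pos)
  have "x * x \<le> (1/2) * (1/2)" using x by (intro mult_mono) auto
  hence bx: "x\<^sup>2 \<le> b\<^sup>2" unfolding b_def bb_sq using x by (simp add: power2_eq_square)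
  have Hd: "H x t = x\<^sup>2 * c\<^sup>2 + b\<^sup>2 * sn\<^sup>2" unfolding b_def c_def sn_def by (rule H_eq)
  have cs: "c\<^sup>2 + sn\<^sup>2 = 1" unfolding c_def sn_def by simp
  have c0: "c \<ge> 0" unfolding c_def using t by (intro cos_ge_zero) auto
  have c1: "c \<le> 1" unfolding c_def by simp
  have Hp: "H x t > 0" using H_pos x by simp
  have K0: "K > 0" unfolding K_def using Hp by simp
  have H1: "H x t \<ge> b\<^sup>2 * sn\<^sup>2" unfolding Hd by simp
  have H2: "H x t \<ge> x\<^sup>2"
  proof -
    have "x\<^sup>2 = x\<^sup>2 * c\<^sup>2 + x\<^sup>2 * sn\<^sup>2" using cs by (metis distrib_left mult.right_neutral)
    also have "\<dots> \<le> H x t" unfolding Hd using bx by (intro add_left_mono mult_right_mono) auto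
    finally show ?thesis .
  qed
  have sH: "sqrt (H x t) \<ge> x" using H2 x real_sqrt_le_mono[OF H2] by simp
  have Kb: "K \<ge> b\<^sup>2 * sn\<^sup>2 * x" unfolding K_def using H1 sH x Hp by (intro mult_mono) auto
  have jjd: "jj x t = (x\<^sup>2 * c\<^sup>2 + x\<^sup>2 * sn\<^sup>2 / 2) / K" unfolding jj_def K_def c_def sn_def ..
  have cc: "c\<^sup>2 \<le> c" using c0 c1 by (simp add: power2_eq_square mult_left_le_one_le)
  have cc3: "c * c\<^sup>2 \<le> c\<^sup>2" using c0 c1 by (simp add: power2_eq_square mult_left_le_one_le)
  have l1: "x / b\<^sup>2 * c * K \<ge> x / b\<^sup>2 * c * (b\<^sup>2 * sn\<^sup>2 * x)"
    using Kb x b0 c0 by (intro mult_left_mono) auto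
  have l2: "x / b\<^sup>2 * c * (b\<^sup>2 * sn\<^sup>2 * x) = x\<^sup>2 * c * sn\<^sup>2" using b0 by (simp add: field_simps power2_eq_square)
  have l3: "x\<^sup>2 * c - x\<^sup>2 * c * sn\<^sup>2 = x\<^sup>2 * (c * c\<^sup>2)"
  proof -
    have e: "sn\<^sup>2 = 1 - c\<^sup>2" using cs by simp
    show ?thesis by (simp only: e) (simp add: algebra_simps)
  qed
  have l4: "x\<^sup>2 * (c * c\<^sup>2) \<le> x\<^sup>2 * c\<^sup>2 + x\<^sup>2 * sn\<^sup>2 / 2"
    using cc3 by (smt (verit) mult_left_mono zero_le_power2 divide_nonneg_pos mult_nonneg_nonneg)
  have "x\<^sup>2 * c / K - x / b\<^sup>2 * c = (x\<^sup>2 * c - x / b\<^sup>2 * c * K) / K" using K0 by (simp add: field_simps)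
  also have "\<dots> \<le> (x\<^sup>2 * c\<^sup>2 + x\<^sup>2 * sn\<^sup>2 / 2) / K"
    using l1 l2 l3 l4 K0 by (intro divide_right_mono) auto
  finally show "x\<^sup>2 * cos t / (H x t * sqrt (H x t)) - x / (bb x)\<^sup>2 * cos t \<le> jj x t"
    unfolding jjd K_def[symmetric] c_def[symmetric] b_def[symmetric] .
  have u1: "x / (2 * b\<^sup>2) * K \<ge> x / (2 * b\<^sup>2) * (b\<^sup>2 * sn\<^sup>2 * x)"
    using Kb x b0 by (intro mult_left_mono) auto
  have u2: "x / (2 * b\<^sup>2) * (b\<^sup>2 * sn\<^sup>2 * x) = x\<^sup>2 * sn\<^sup>2 / 2" using b0 by (simp add: field_simps power2_eq_square)
  have u3: "x\<^sup>2 * c\<^sup>2 \<le> x\<^sup>2 * c" using cc by (intro mult_left_mono) auto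
  have "(x\<^sup>2 * c\<^sup>2 + x\<^sup>2 * sn\<^sup>2 / 2) / K \<le> (x\<^sup>2 * c + x / (2 * b\<^sup>2) * K) / K"
    using u1 u2 u3 K0 by (intro divide_right_mono) auto
  also have "\<dots> = x\<^sup>2 * c / K + x / (2 * b\<^sup>2)" using K0 by (simp add: field_simps)
  finally show "jj x t \<le> x\<^sup>2 * cos t / (H x t * sqrt (H x t)) + x / (2 * (bb x)\<^sup>2)"
    unfolding jjd K_def[symmetric] c_def[symmetric] b_def[symmetric] .
qed

lemma cos_integral: "(cos has_integral 1) {0..pi/2}"
proof -
  have "(cos has_integral (sin (pi/2) - sin 0)) {0..pi/2}"
  proof (rule fundamental_theorem_of_calculus)
    show "0 \<le> pi/2" by simp
    fix t :: real
    show "(sin has_vector_derivative cos t) (at t within {0..pi/2})"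
      using DERIV_sin[of t] by (simp add: has_real_derivative_iff_has_vector_derivative[symmetric] has_field_derivative_at_within)
  qed
  thus ?thesis by simp
qed

lemma JJ_bounds:
  assumes x: "0 < x" "x \<le> 1/2"
  shows "1 / bb x - x / (bb x)\<^sup>2 \<le> JJ x" "JJ x \<le> 1 / bb x + pi/2 * (x / (2 * (bb x)\<^sup>2))"
proof -
  have jint: "(jj x has_integral JJ x) {0..pi/2}" unfolding JJ_def
    using cont_jj[OF x(1)] by (intro integrable_integral integrable_continuous_interval)
  have lo: "((\<lambda>t. x\<^sup>2 * cos t / (H x t * sqrt (H x t)) - x / (bb x)\<^sup>2 * cos t) has_integral (1 / bb x - x / (bb x)\<^sup>2 * 1)) {0..pi/2}"
    by (intro has_integral_diff antideriv x has_integral_mult_right cos_integral)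
  show "1 / bb x - x / (bb x)\<^sup>2 \<le> JJ x"
    using has_integral_le[OF lo jint] jj_bounds(1)[OF x] by auto
  have hi: "((\<lambda>t. x\<^sup>2 * cos t / (H x t * sqrt (H x t)) + x / (2 * (bb x)\<^sup>2)) has_integral (1 / bb x + Henstock_Kurzweil_Integration.content {0..pi/2} *\<^sub>R (x / (2 * (bb x)\<^sup>2)))) {0..pi/2}"
    by (intro has_integral_add antideriv x has_integral_const_real)
  show "JJ x \<le> 1 / bb x + pi/2 * (x / (2 * (bb x)\<^sup>2))"
    using has_integral_le[OF jint hi] jj_bounds(2)[OF x] by auto
qed


definition a1 :: real where "a1 = 1/20"

lemma bb_ge: "bb x \<ge> 1/2"
proof -
  have "1 \<le> sqrt (1 + 2 * x\<^sup>2)" by simp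
  thus ?thesis unfolding bb_def by simp
qed

lemma DL_bound:
  assumes x: "0 < x" "x \<le> a1"
  shows "DL x \<le> -3 / x"
proof -
  define b where "b = bb x"
  have b1: "b \<ge> 1/2" unfolding b_def by (rule bb_ge)
  have xx: "x * x \<le> (1/20) * (1/20)" using x unfolding a1_def by (intro mult_mono) auto
  have b2: "b\<^sup>2 \<le> 1/4 + 1/800" unfolding b_def bb_sq using xx by (simp add: power2_eq_square)
  have x2: "x \<le> 1/20" using x unfolding a1_def by simp
  have key: "3/2 * b\<^sup>2 \<le> b - x" using b1 b2 x2 by linarith
  have bp: "b\<^sup>2 > 0" using b1 by simp
  have b0: "b \<noteq> 0" using b1 by simp
  have "1 / b - x / b\<^sup>2 = (b - x) / b\<^sup>2" using b0 by (simp add: field_simps power2_eq_square)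
  also have "\<dots> \<ge> 3/2" using key bp by (simp add: pos_le_divide_eq)
  finally have f1: "1 / b - x / b\<^sup>2 \<ge> 3/2" .
  have "1 / b - x / b\<^sup>2 \<le> JJ x" unfolding b_def using JJ_bounds(1)[of x] x unfolding a1_def by simp
  hence "JJ x \<ge> 3/2" using f1 by linarith
  hence "x * DL x \<le> -3" using xDL[OF x(1)] by simp
  thus ?thesis using x(1) by (simp add: field_simps)
qed

lemma DL_neg: "0 < x \<Longrightarrow> x \<le> a1 \<Longrightarrow> DL x < 0"
proof -
  assume x: "0 < x" "x \<le> a1"
  have "-3 / x < 0" using x by simp
  thus ?thesis using DL_bound[OF x] by linarith
qed

lemma Lf_strict: "0 < x \<Longrightarrow> x < y \<Longrightarrow> y \<le> a1 \<Longrightarrow> Lf y < Lf x"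
proof -
  assume xy: "0 < x" "x < y" "y \<le> a1"
  show ?thesis
  proof (rule DERIV_neg_imp_decreasing[OF xy(2)])
    fix z assume "x \<le> z" "z \<le> y"
    hence z: "0 < z" "z \<le> a1" using xy by auto
    show "\<exists>D. DERIV Lf z :> D \<and> D < 0" using Lf_deriv[OF z(1)] DL_neg[OF z] by blast
  qed
qed

lemma Lf_mono: "0 < x \<Longrightarrow> x \<le> y \<Longrightarrow> y \<le> a1 \<Longrightarrow> Lf y \<le> Lf x"
  using Lf_strict[of x y] by (cases "x = y") auto

lemma Lf_cont: "0 < x \<Longrightarrow> isCont Lf x"
  using Lf_deriv DERIV_isCont by blast

lemma Lf_log_bound:
  assumes x: "0 < x" "x \<le> a1"
  shows "Lf x \<ge> Lf a1 + 3 * (ln a1 - ln x)"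
proof -
  have "(\<lambda>z. Lf z + 3 * ln z) a1 \<le> (\<lambda>z. Lf z + 3 * ln z) x"
  proof (rule DERIV_nonpos_imp_nonincreasing[OF x(2)])
    fix z assume z: "x \<le> z" "z \<le> a1"
    hence z0: "z > 0" using x by simp
    have "DERIV (\<lambda>z. Lf z + 3 * ln z) z :> DL z + 3 * inverse z"
      using z0 by (auto intro!: derivative_eq_intros Lf_deriv simp: divide_inverse)
    moreover have "DL z + 3 * inverse z \<le> 0" using DL_bound[OF z0 z(2)] z0 by (simp add: divide_inverse)
    ultimately show "\<exists>y. DERIV (\<lambda>z. Lf z + 3 * ln z) z :> y \<and> y \<le> 0" by blast
  qed
  thus ?thesis by simp
qed

definition invL :: "real \<Rightarrow> real" where
  "invL T = (THE x. 0 < x \<and> x \<le> a1 \<and> Lf x = T)"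

lemma a1_pos: "a1 > 0" unfolding a1_def by simp

lemma Lf_inj: "0 < w \<Longrightarrow> w \<le> a1 \<Longrightarrow> 0 < z \<Longrightarrow> z \<le> a1 \<Longrightarrow> Lf w = Lf z \<Longrightarrow> w = z"
  by (metis Lf_strict linorder_neqE_linordered_idom less_irrefl)

lemma invL_Lf: "0 < z \<Longrightarrow> z \<le> a1 \<Longrightarrow> invL (Lf z) = z"
  unfolding invL_def by (rule the_equality) (auto intro: Lf_inj)

lemma Lf_surj:
  assumes T: "T \<ge> Lf a1"
  shows "\<exists>x. 0 < x \<and> x \<le> a1 \<and> Lf x = T"
proof -
  define x0 where "x0 = a1 * exp (- (T - Lf a1) / 3)"
  have x0: "0 < x0" unfolding x0_def using a1_pos by simp
  have "exp (- (T - Lf a1) / 3) \<le> 1" using T by simp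
  hence x0a: "x0 \<le> a1" unfolding x0_def using a1_pos by (simp add: mult_left_le)
  have "ln x0 = ln a1 + (- (T - Lf a1) / 3)" unfolding x0_def using a1_pos by (simp add: ln_mult)
  hence "3 * (ln a1 - ln x0) = T - Lf a1" by (simp add: field_simps)
  hence "Lf x0 \<ge> T" using Lf_log_bound[OF x0 x0a] by linarith
  moreover have "continuous_on {x0..a1} Lf"
    using x0 by (intro continuous_at_imp_continuous_on) (auto intro!: Lf_cont)
  ultimately obtain x where "x0 \<le> x" "x \<le> a1" "Lf x = T"
    using IVT2'[of Lf a1 T x0] T x0a by auto
  thus ?thesis using x0 by (intro exI[of _ x]) auto
qed

lemma invL_props:
  assumes "T \<ge> Lf a1"
  shows "0 < invL T" "invL T \<le> a1" "Lf (invL T) = T"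
proof -
  obtain x where x: "0 < x" "x \<le> a1" "Lf x = T" using Lf_surj[OF assms] by blast
  have "invL T = x" using invL_Lf[OF x(1,2)] x(3) by simp
  thus "0 < invL T" "invL T \<le> a1" "Lf (invL T) = T" using x by auto
qed

lemma invL_lt:
  assumes "T > Lf a1"
  shows "invL T < a1"
proof -
  have "invL T \<noteq> a1" using invL_props(3)[of T] assms by auto
  thus ?thesis using invL_props(2)[of T] assms by simp
qed

lemma invL_deriv:
  assumes T: "T > Lf a1"
  shows "DERIV invL T :> inverse (DL (invL T))"
proof (rule DERIV_inverse_function[where f=Lf and a="Lf a1" and b="T + 1"])
  show "DERIV Lf (invL T) :> DL (invL T)" using invL_props(1)[of T] T by (intro Lf_deriv) auto
  show "DL (invL T) \<noteq> 0" using invL_props(1,2)[of T] T DL_neg by (metis less_imp_le less_irrefl)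
  show "Lf a1 < T" "T < T + 1" using T by auto
  show "\<And>y. Lf a1 < y \<Longrightarrow> y < T + 1 \<Longrightarrow> Lf (invL y) = y" using invL_props(3) by auto
  have "isCont invL (Lf (invL T))"
  proof (rule isCont_inverse_function2[where a="invL T / 2" and b=a1 and f=Lf and g=invL and x="invL T"])
    show "invL T / 2 < invL T" using invL_props(1)[of T] T by simp
    show "invL T < a1" using invL_lt T by simp
    fix z assume z: "invL T / 2 \<le> z" "z \<le> a1"
    hence z0: "0 < z" using invL_props(1)[of T] T by simp
    show "invL (Lf z) = z" using invL_Lf z0 z(2) by simp
    show "isCont Lf z" using Lf_cont z0 by simp
  qed
  thus "isCont invL T" using invL_props(3)[of T] T by simp
qed

lemma invL_tendsto: "filterlim invL (at_right 0) at_top"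
  unfolding filterlim_at
proof
  show "\<forall>\<^sub>F x in at_top. invL x \<in> {0<..} \<and> invL x \<noteq> 0"
    using eventually_ge_at_top[of "Lf a1"]
  proof eventually_elim
    case (elim T) thus ?case using invL_props(1)[OF elim] by simp
  qed
  show "(invL \<longlongrightarrow> 0) at_top"
  proof (rule order_tendstoI)
    fix a :: real assume "a < 0"
    show "\<forall>\<^sub>F x in at_top. a < invL x"
      using eventually_ge_at_top[of "Lf a1"]
    proof eventually_elim
      case (elim T) thus ?case using invL_props(1)[OF elim] \<open>a < 0\<close> by simp
    qed
  next
    fix a :: real assume a: "0 < a"
    define e where "e = min (a/2) a1"
    have e: "0 < e" "e \<le> a1" "e < a" unfolding e_def using a a1_pos by auto
    have Le: "Lf e \<ge> Lf a1" using Lf_mono[OF e(1) e(2)] by simp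
    show "\<forall>\<^sub>F x in at_top. invL x < a"
      using eventually_gt_at_top[of "Lf e"]
    proof eventually_elim
      case (elim T)
      hence T: "T \<ge> Lf a1" using Le by simp
      have "invL T < e"
      proof (rule ccontr)
        assume "\<not> invL T < e"
        hence "Lf (invL T) \<le> Lf e" using Lf_mono[OF e(1) _ invL_props(2)[OF T]] by simp
        thus False using invL_props(3)[OF T] elim by simp
      qed
      thus ?case using e by simp
    qed
  qed
qed

lemma bb_lim: "(bb \<longlongrightarrow> 1/2) (at_right 0)"
proof -
  have "((\<lambda>x::real. sqrt (1 + 2 * x\<^sup>2) / 2) \<longlongrightarrow> sqrt (1 + 2 * 0\<^sup>2) / 2) (at_right 0)"
    by (intro tendsto_intros) simp
  thus ?thesis unfolding bb_def by simp
qed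

lemma x_bb_lim: "((\<lambda>x. x / (bb x)\<^sup>2) \<longlongrightarrow> 0) (at_right 0)"
proof -
  have "((\<lambda>x. (bb x)\<^sup>2) \<longlongrightarrow> (1/2)\<^sup>2) (at_right 0)" by (intro tendsto_intros bb_lim)
  from tendsto_divide[OF tendsto_ident_at this] show ?thesis by simp
qed

lemma xDL_lim: "((\<lambda>x. x * DL x) \<longlongrightarrow> -4) (at_right 0)"
proof -
  have lo: "((\<lambda>x. 1 / bb x - x / (bb x)\<^sup>2) \<longlongrightarrow> 1 / (1/2) - 0) (at_right 0)"
    by (intro tendsto_diff tendsto_divide tendsto_const bb_lim x_bb_lim) simp
  hence lo': "((\<lambda>x. 1 / bb x - x / (bb x)\<^sup>2) \<longlongrightarrow> 2) (at_right 0)" by simp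
  have hi: "((\<lambda>x. 1 / bb x + pi/2 * ((x / (bb x)\<^sup>2) / 2)) \<longlongrightarrow> 1 / (1/2) + pi/2 * (0 / 2)) (at_right 0)"
    by (intro tendsto_add tendsto_mult tendsto_divide tendsto_const bb_lim x_bb_lim) simp_all
  hence hi': "((\<lambda>x. 1 / bb x + pi/2 * ((x / (bb x)\<^sup>2) / 2)) \<longlongrightarrow> 2) (at_right 0)" by simp
  have "eventually (\<lambda>x. x \<in> {0<..<1/2}) (at_right (0::real))" by (rule eventually_at_right_real) simp
  hence ev: "\<forall>\<^sub>F x in at_right (0::real). 0 < x \<and> x \<le> 1/2" by eventually_elim auto
  have "(JJ \<longlongrightarrow> 2) (at_right 0)"
  proof (rule tendsto_sandwich[OF _ _ lo' hi'])
    show "\<forall>\<^sub>F n in at_right 0. 1 / bb n - n / (bb n)\<^sup>2 \<le> JJ n"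
      using ev
    proof eventually_elim
      case (elim n) thus ?case using JJ_bounds(1)[of n] by simp
    qed
    show "\<forall>\<^sub>F n in at_right 0. JJ n \<le> 1 / bb n + pi / 2 * ((n / (bb n)\<^sup>2) / 2)"
      using ev
    proof eventually_elim
      case (elim n)
      have "n / (2 * (bb n)\<^sup>2) = (n / (bb n)\<^sup>2) / 2" by (simp add: divide_divide_eq_left mult.commute)
      thus ?case using JJ_bounds(2)[of n] elim by simp
    qed
  qed
  hence "((\<lambda>x. -2 * JJ x) \<longlongrightarrow> -2 * 2) (at_right 0)" by (intro tendsto_mult tendsto_const)
  hence lim: "((\<lambda>x. -2 * JJ x) \<longlongrightarrow> -4) (at_right 0)" by simp
  have "\<forall>\<^sub>F x in at_right 0. -2 * JJ x = x * DL x"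
    using ev
  proof eventually_elim
    case (elim x) thus ?case using xDL[of x] by simp
  qed
  thus ?thesis by (rule Lim_transform_eventually[OF lim])
qed


definition sq :: "real \<Rightarrow> real" where "sq a = sqrt (1 - 4 * a ^ 4)"
definition uu :: "real \<Rightarrow> real" where "uu a = (1 - sq a) / 2"
definition yf :: "real \<Rightarrow> real" where "yf a = sqrt (uu a)"
definition yd :: "real \<Rightarrow> real" where "yd a = inverse (sqrt (uu a)) / 2 * (4 * a ^ 3 / sq a)"

lemma a4_small: "0 < a \<Longrightarrow> a \<le> a1 \<Longrightarrow> 4 * a ^ 4 < 1"
proof -
  assume a: "0 < a" "a \<le> a1"
  have "a ^ 4 \<le> (1/20) ^ 4" using a unfolding a1_def by (intro power_mono) auto
  also have "(1/20::real) ^ 4 = 1/160000" by (simp add: power_divide)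
  finally have "a ^ 4 \<le> 1/160000" .
  thus ?thesis by linarith
qed

lemma sq_props: "0 < a \<Longrightarrow> a \<le> a1 \<Longrightarrow> 0 < sq a \<and> sq a < 1 \<and> (sq a)\<^sup>2 = 1 - 4 * a ^ 4"
proof -
  assume a: "0 < a" "a \<le> a1"
  have h: "4 * a ^ 4 < 1" using a4_small a by blast
  have "4 * a ^ 4 > 0" using a by simp
  hence "1 - 4 * a ^ 4 < 1" by simp
  thus ?thesis unfolding sq_def using h by (simp add: real_sqrt_lt_1_iff)
qed

lemma uu_pos: "0 < a \<Longrightarrow> a \<le> a1 \<Longrightarrow> uu a > 0"
  unfolding uu_def using sq_props by fastforce

lemma yf_deriv:
  assumes a: "0 < a" "a \<le> a1"
  shows "DERIV yf a :> yd a"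
proof -
  have v: "1 - 4 * a ^ 4 > 0" using a4_small a by simp
  have d1: "DERIV (\<lambda>a. 1 - 4 * a ^ 4) a :> - (4 * (4 * a ^ 3))"
    by (intro derivative_eq_intros) auto
  have d2: "DERIV sq a :> inverse (sq a) / 2 * (- (4 * (4 * a ^ 3)))"
    unfolding sq_def by (rule DERIV_chain2[OF DERIV_real_sqrt[OF v] d1])
  have d3: "DERIV uu a :> (0 - inverse (sq a) / 2 * (- (4 * (4 * a ^ 3)))) / 2"
    unfolding uu_def by (rule DERIV_cdivide[OF DERIV_diff[OF DERIV_const d2]])
  have e: "(0 - inverse (sq a) / 2 * (- (4 * (4 * a ^ 3)))) / 2 = 4 * a ^ 3 / sq a"
    by (simp add: field_simps)
  have d4: "DERIV yf a :> inverse (sqrt (uu a)) / 2 * (4 * a ^ 3 / sq a)"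
    unfolding yf_def by (rule DERIV_chain2[OF DERIV_real_sqrt[OF uu_pos[OF a]] d3[unfolded e]])
  thus ?thesis unfolding yd_def .
qed

definition RR :: "real \<Rightarrow> real" where "RR a = a * yd a / yf a"

lemma RR_gen: "(y::real) > 0 \<Longrightarrow> s > 0 \<Longrightarrow> a * (inverse y / 2 * (4 * a ^ 3 / s)) / y = 2 * a ^ 4 / (s * (y * y))"
  by (simp add: field_simps power_numeral_reduce)

lemma RR_eq:
  assumes a: "0 < a" "a \<le> a1"
  shows "RR a = (1 + sq a) / sq a"
proof -
  obtain s where s: "s = sq a" "0 < s" "s < 1" "s\<^sup>2 = 1 - 4 * a ^ 4" using sq_props[OF a] by blast
  have u: "uu a = (1 - s) / 2" unfolding uu_def s(1) ..
  have up: "uu a > 0" using uu_pos[OF a] .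
  have yy: "yf a * yf a = uu a" unfolding yf_def using up by simp
  have yp: "yf a > 0" unfolding yf_def using up by simp
  have "RR a = a * (inverse (yf a) / 2 * (4 * a ^ 3 / s)) / yf a"
    unfolding RR_def yd_def yf_def s(1) ..
  also have "\<dots> = 2 * a ^ 4 / (s * (yf a * yf a))"
    using yp s(2) by (rule RR_gen)
  also have "\<dots> = 2 * a ^ 4 / (s * ((1 - s) / 2))" unfolding yy u ..
  also have "2 * a ^ 4 = (1 - s\<^sup>2) / 2" using s(4) by simp
  also have "(1 - s\<^sup>2) / 2 / (s * ((1 - s) / 2)) = (1 + s) / s"
    using s(2,3) by (simp add: field_simps power2_eq_square)
  finally show ?thesis using s(1) by simp
qed

definition GG :: "real \<Rightarrow> real" where "GG a = RR a / (a * DL a)"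

lemma sq_lim: "(sq \<longlongrightarrow> 1) (at_right 0)"
proof -
  have "((\<lambda>a::real. sqrt (1 - 4 * a ^ 4)) \<longlongrightarrow> sqrt (1 - 4 * 0 ^ 4)) (at_right 0)"
    by (intro tendsto_intros)
  thus ?thesis unfolding sq_def by simp
qed

lemma GG_lim: "(GG \<longlongrightarrow> -1/2) (at_right 0)"
proof -
  have "eventually (\<lambda>x. x \<in> {0<..<a1}) (at_right (0::real))" by (rule eventually_at_right_real) (simp add: a1_pos)
  hence ev: "\<forall>\<^sub>F x in at_right (0::real). 0 < x \<and> x \<le> a1" by eventually_elim auto
  have "((\<lambda>a. (1 + sq a) / sq a) \<longlongrightarrow> (1 + 1) / 1) (at_right 0)"
    by (intro tendsto_add tendsto_divide tendsto_const sq_lim) simp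
  hence "((\<lambda>a. (1 + sq a) / sq a) \<longlongrightarrow> 2) (at_right 0)" by simp
  hence R: "(RR \<longlongrightarrow> 2) (at_right 0)"
  proof (rule Lim_transform_eventually)
    show "\<forall>\<^sub>F x in at_right 0. (1 + sq x) / sq x = RR x"
      using ev by eventually_elim (simp add: RR_eq)
  qed
  have "((\<lambda>a. RR a / (a * DL a)) \<longlongrightarrow> 2 / (-4)) (at_right 0)"
    by (intro tendsto_divide R xDL_lim) simp
  thus ?thesis unfolding GG_def by simp
qed


lemma y0_eq:
  fixes X Y \<alpha> :: real
  assumes "X > Y" "Y > 0" "X\<^sup>2 + Y\<^sup>2 = 1" "X * Y = \<alpha>\<^sup>2" "0 < \<alpha>" "\<alpha> \<le> a1"
  shows "Y = yf \<alpha>"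
proof -
  have "(X\<^sup>2 - Y\<^sup>2)\<^sup>2 = (X\<^sup>2 + Y\<^sup>2)\<^sup>2 - 4 * (X * Y)\<^sup>2" by (simp add: power2_eq_square algebra_simps)
  also have "\<dots> = 1 - 4 * \<alpha> ^ 4" using assms(3,4) by (simp add: power_mult[symmetric])
  finally have e: "(X\<^sup>2 - Y\<^sup>2)\<^sup>2 = 1 - 4 * \<alpha> ^ 4" .
  have "Y\<^sup>2 < X\<^sup>2" using assms(1,2) by (simp add: power_strict_mono)
  hence "X\<^sup>2 - Y\<^sup>2 = sq \<alpha>" unfolding sq_def e[symmetric] by simp
  hence "Y\<^sup>2 = uu \<alpha>" unfolding uu_def using assms(3) by simp
  hence "sqrt (uu \<alpha>) = Y" using assms(2) by (intro real_sqrt_unique) auto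
  thus ?thesis unfolding yf_def by simp
qed

lemma a1_lt: "a1 < 1 / sqrt 2"
proof -
  have "sqrt 2 < 20" using sqrt2_less_2 by simp
  thus ?thesis unfolding a1_def by (simp add: field_simps)
qed

theorem lemma8p4:
  fixes x y z :: "real \<Rightarrow> real \<Rightarrow> real"
  assumes init: "\<And>L \<alpha>. L > pi * sqrt 2 \<Longrightarrow> 0 < \<alpha> \<Longrightarrow> \<alpha> < 1 / sqrt 2 \<Longrightarrow>
      L_alpha \<alpha> = L \<Longrightarrow>
      x L 0 > y L 0 \<and> y L 0 > 0 \<and> (x L 0)\<^sup>2 + (y L 0)\<^sup>2 = 1 \<and> x L 0 * y L 0 = \<alpha>\<^sup>2
      \<and> z L 0 = 0"
    and ode_x: "\<And>L t. L > pi * sqrt 2 \<Longrightarrow>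
      ((x L) has_real_derivative (- x L t * z L t)) (at t)"
    and ode_y: "\<And>L t. L > pi * sqrt 2 \<Longrightarrow>
      ((y L) has_real_derivative (y L t * z L t)) (at t)"
    and ode_z: "\<And>L t. L > pi * sqrt 2 \<Longrightarrow>
      ((z L) has_real_derivative ((x L t)\<^sup>2 - (y L t)\<^sup>2)) (at t)"
  shows "((\<lambda>L. deriv (\<lambda>M. y M 0) L / y L 0) \<longlongrightarrow> - 1 / 2) at_top"
proof -
  define T0 where "T0 = max (pi * sqrt 2) (Lf a1)"
  have yeq: "y T 0 = yf (invL T)" if T: "T > T0" for T
  proof -
    have T1: "T \<ge> Lf a1" "T > pi * sqrt 2" using T unfolding T0_def by auto
    have p: "0 < invL T" "invL T \<le> a1" "Lf (invL T) = T" using invL_props[OF T1(1)] by auto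
    have "L_alpha (invL T) = T" using L_alpha_Lf[OF p(1)] p(3) by simp
    moreover have "invL T < 1 / sqrt 2" using p(2) a1_lt by simp
    ultimately have "x T 0 > y T 0 \<and> y T 0 > 0 \<and> (x T 0)\<^sup>2 + (y T 0)\<^sup>2 = 1 \<and> x T 0 * y T 0 = (invL T)\<^sup>2"
      using init[OF T1(2) p(1)] by blast
    thus ?thesis using y0_eq p(1,2) by blast
  qed
  have Yeq: "deriv (\<lambda>M. y M 0) T / y T 0 = GG (invL T)" if T: "T > T0" for T
  proof -
    have T1: "T > Lf a1" using T unfolding T0_def by auto
    have p: "0 < invL T" "invL T \<le> a1" using invL_props[of T] T1 by auto
    have d: "DERIV (\<lambda>M. yf (invL M)) T :> yd (invL T) * inverse (DL (invL T))"
      by (rule DERIV_chain2[OF yf_deriv[OF p] invL_deriv[OF T1]])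
    have "DERIV (\<lambda>M. y M 0) T :> yd (invL T) * inverse (DL (invL T))"
    proof (rule has_field_derivative_transform_within_open[OF d, of "{T0<..}"])
      show "open {T0<..}" by simp
      show "T \<in> {T0<..}" using T by simp
      fix M assume "M \<in> {T0<..}"
      thus "yf (invL M) = y M 0" using yeq by simp
    qed
    hence "deriv (\<lambda>M. y M 0) T = yd (invL T) * inverse (DL (invL T))" by (rule DERIV_imp_deriv)
    moreover have "y T 0 = yf (invL T)" using yeq T by simp
    moreover have "yf (invL T) > 0" unfolding yf_def using uu_pos[OF p] by simp
    moreover have "DL (invL T) < 0" using DL_neg[OF p] .
    ultimately show ?thesis unfolding GG_def RR_def using p(1)
      by (simp add: field_simps)
  qed
  have "((\<lambda>T. GG (invL T)) \<longlongrightarrow> -1/2) at_top"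
    by (rule filterlim_compose[OF GG_lim invL_tendsto])
  moreover have "\<forall>\<^sub>F T in at_top. GG (invL T) = deriv (\<lambda>M. y M 0) T / y T 0"
    using eventually_gt_at_top[of T0] by eventually_elim (simp add: Yeq)
  ultimately have "((\<lambda>T. deriv (\<lambda>M. y M 0) T / y T 0) \<longlongrightarrow> -1/2) at_top"
    by (rule Lim_transform_eventually)
  thus ?thesis by simp
qed


end
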